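(* Let $c$ be the complex Banach space of convergent sequences with the supremum norm, and let $L\in c^*$ be $L((c_n)_n)=\lim_{n\to\infty}c_n$ (so $\|L\|=1$). Let $\epsilon>0$. If $S:c\to c$ is a finite rank bounded linear operator with $\|(S^*-I_{c^*})L\|<\epsilon$, then $\|S-I_c\|\ge 2-\epsilon$. *)

theory Defs
  imports "HOL-Analysis.Analysis"
begin

definition conv_seqs :: "(nat \<Rightarrow> complex) set" where
  "conv_seqs = {x. convergent x}"

definition supnorm :: "(nat \<Rightarrow> complex) \<Rightarrow> real" where
  "supnorm x = (SUP n. cmod (x n))"

definition limfun :: "(nat \<Rightarrow> complex) \<Rightarrow> complex" where
  "limfun x = lim x"

definition bounded_linear_on_c :: "((nat \<Rightarrow> complex) \<Rightarrow> (nat \<Rightarrow> complex)) \<Rightarrow> bool" where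
  "bounded_linear_on_c S \<longleftrightarrow>
     (\<forall>x\<in>conv_seqs. S x \<in> conv_seqs) \<and>
     (\<forall>x\<in>conv_seqs. \<forall>y\<in>conv_seqs. S (\<lambda>n. x n + y n) = (\<lambda>n. S x n + S y n)) \<and>
     (\<forall>a::complex. \<forall>x\<in>conv_seqs. S (\<lambda>n. a * x n) = (\<lambda>n. a * S x n)) \<and>
     (\<exists>K. \<forall>x\<in>conv_seqs. supnorm (S x) \<le> K * supnorm x)"

definition finite_rank_on_c :: "((nat \<Rightarrow> complex) \<Rightarrow> (nat \<Rightarrow> complex)) \<Rightarrow> bool" where
  "finite_rank_on_c S \<longleftrightarrow>
     (\<exists>(m::nat) (v :: nat \<Rightarrow> nat \<Rightarrow> complex). (\<forall>i<m. v i \<in> conv_seqs) \<and>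
        (\<forall>x\<in>conv_seqs. \<exists>a :: nat \<Rightarrow> complex. S x = (\<lambda>k. \<Sum>i<m. a i * v i k)))"

definition opnorm_minus_id :: "((nat \<Rightarrow> complex) \<Rightarrow> (nat \<Rightarrow> complex)) \<Rightarrow> real" where
  "opnorm_minus_id S =
     Sup {supnorm (\<lambda>n. S x n - x n) | x. x \<in> conv_seqs \<and> supnorm x \<le> 1}"

text \<open>Norm in c* of (S^* - I) L, i.e. of the functional x |-> L(Sx) - L(x).\<close>
definition adj_minus_id_L_norm :: "((nat \<Rightarrow> complex) \<Rightarrow> (nat \<Rightarrow> complex)) \<Rightarrow> real" where
  "adj_minus_id_L_norm S =
     Sup {cmod (limfun (S x) - limfun x) | x. x \<in> conv_seqs \<and> supnorm x \<le> 1}"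

end

theory Submission
  imports Defs
begin

lemma conv_bdd: "convergent x \<Longrightarrow> bdd_above (range (\<lambda>n. cmod (x n)))"
  by (metis Bseq_def bdd_aboveI2 convergent_imp_Bseq)

lemma conv_le_sup: "convergent x \<Longrightarrow> cmod (x n) \<le> supnorm x"
  unfolding supnorm_def by (rule cSUP_upper[OF _ conv_bdd]) auto

lemma sup_le: "(\<And>n. cmod (x n) \<le> B) \<Longrightarrow> supnorm x \<le> B"
  unfolding supnorm_def by (rule cSUP_least) auto

lemma lim_le_sup: assumes "convergent x" shows "cmod (lim x) \<le> supnorm x"
proof -
  have "x \<longlonglongrightarrow> lim x" using assms convergent_LIMSEQ_iff by blast
  hence "(\<lambda>n. cmod (x n)) \<longlonglongrightarrow> cmod (lim x)" by (rule tendsto_norm)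
  thus ?thesis using conv_le_sup[OF assms] by (intro LIMSEQ_le_const2) auto
qed

lemma sum_conv:
  fixes v :: "nat \<Rightarrow> nat \<Rightarrow> complex" and a :: "nat \<Rightarrow> complex"
  assumes "\<forall>i<m. convergent (v i)"
  shows "(\<lambda>k. \<Sum>i<m. a i * v i k) \<longlonglongrightarrow> (\<Sum>i<m. a i * lim (v i))"
  using assms by (auto intro!: tendsto_sum tendsto_mult_left simp: convergent_LIMSEQ_iff)

lemma conv_comb: fixes f g :: "nat \<Rightarrow> complex" assumes "convergent f" "convergent g"
  shows "convergent (\<lambda>k. f k - a * g k / c)"
proof -
  have "f \<longlonglongrightarrow> lim f" "g \<longlonglongrightarrow> lim g" using assms convergent_LIMSEQ_iff by blast+
  hence "(\<lambda>k. f k - (a / c) * g k) \<longlonglongrightarrow> lim f - (a / c) * lim g" by (intro tendsto_intros)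
  hence "(\<lambda>k. f k - a * g k / c) \<longlonglongrightarrow> lim f - (a / c) * lim g" by (simp add: field_simps)
  thus ?thesis by (rule convergentI)
qed

lemma lim_const': "lim (\<lambda>k. c) = c" by (simp add: limI)

lemma tail_unif:
  fixes v :: "nat \<Rightarrow> nat \<Rightarrow> complex"
  assumes "\<forall>i<m. convergent (v i)" "\<forall>w\<in>W. \<exists>a. w = (\<lambda>k. \<Sum>i<m. a i * v i k)"
    "\<forall>w\<in>W. \<forall>n. cmod (w n) \<le> B" "\<delta> > 0"
  shows "\<exists>N. \<forall>n\<ge>N. \<forall>w\<in>W. cmod (w n - lim w) \<le> \<delta>"
  using assms
proof (induction m arbitrary: v W B \<delta>)
  case 0
  have "\<forall>w\<in>W. cmod (w n - lim w) \<le> \<delta>" for n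
  proof
    fix w assume "w \<in> W"
    hence "w = (\<lambda>k. 0)" using 0 by auto
    thus "cmod (w n - lim w) \<le> \<delta>" using 0 by (simp add: lim_const')
  qed
  then show ?case by blast
next
  case (Suc m)
  show ?case
  proof (cases "\<forall>k. v m k = 0")
    case True
    have "\<forall>w\<in>W. \<exists>a. w = (\<lambda>k. \<Sum>i<m. a i * v i k)"
      using Suc.prems(2) True by simp
    then show ?thesis using Suc.IH[of v W B \<delta>] Suc.prems by auto
  next
    case False
    then obtain n0 where n0: "v m n0 \<noteq> 0" by auto
    define c where "c = v m n0"
    have cm: "cmod c > 0" using n0 c_def by simp
    define v' where "v' i k = v i k - (v i n0 / c) * v m k" for i k
    define cw where "cw w = w n0 / c" for w :: "nat \<Rightarrow> complex"
    have vmc: "convergent (v m)" using Suc.prems(1) by auto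
    obtain Bv where Bv: "\<forall>k. cmod (v m k) \<le> Bv" using conv_bdd[OF vmc]
      by (auto simp: bdd_above_def)
    have cwb: "cmod (cw w) \<le> \<bar>B\<bar> / cmod c" if "w \<in> W" for w
      using Suc.prems(3) that cm unfolding cw_def
      by (auto simp: norm_divide intro!: divide_right_mono order.trans[OF _ abs_ge_self])
    define W' where "W' = (\<lambda>w. \<lambda>k. w k - cw w * v m k) ` W"
    have v'c: "\<forall>i<m. convergent (v' i)"
      using Suc.prems(1) unfolding v'_def by (auto simp: conv_comb)
    have rep: "\<forall>w\<in>W'. \<exists>a. w = (\<lambda>k. \<Sum>i<m. a i * v' i k)"
    proof
      fix w' assume "w' \<in> W'"
      then obtain w where w: "w \<in> W" and w': "w' = (\<lambda>k. w k - cw w * v m k)"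
        unfolding W'_def by auto
      obtain a where a: "w = (\<lambda>k. \<Sum>i<Suc m. a i * v i k)" using Suc.prems(2) w by auto
      have "w' = (\<lambda>k. \<Sum>i<m. a i * v' i k)"
      proof
        fix k
        have "w' k = (\<Sum>i<m. a i * v i k) + a m * v m k
             - ((\<Sum>i<m. a i * v i n0) + a m * c) / c * v m k"
          unfolding w' cw_def by (simp add: a c_def)
        also have "\<dots> = (\<Sum>i<m. a i * v i k) - (\<Sum>i<m. a i * v i n0) / c * v m k"
          using n0 c_def by (simp add: field_simps)
        also have "\<dots> = (\<Sum>i<m. a i * v i k - (a i * v i n0 / c) * v m k)"
          by (simp add: sum_subtractf sum_divide_distrib sum_distrib_right)
        also have "\<dots> = (\<Sum>i<m. a i * v' i k)"
          unfolding v'_def by (simp add: algebra_simps)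
        finally show "w' k = (\<Sum>i<m. a i * v' i k)" .
      qed
      thus "\<exists>a. w' = (\<lambda>k. \<Sum>i<m. a i * v' i k)" by blast
    qed
    define C where "C = \<bar>B\<bar> / cmod c + 1"
    have Cp: "C > 0" unfolding C_def
      by (metis abs_ge_zero add_nonneg_pos norm_ge_zero divide_nonneg_nonneg zero_less_one)
    have bnd: "\<forall>w\<in>W'. \<forall>n. cmod (w n) \<le> \<bar>B\<bar> + C * \<bar>Bv\<bar>"
    proof (intro ballI allI)
      fix w' n assume "w' \<in> W'"
      then obtain w where w: "w \<in> W" and w': "w' = (\<lambda>k. w k - cw w * v m k)"
        unfolding W'_def by auto
      have "cmod (w' n) \<le> cmod (w n) + cmod (cw w) * cmod (v m n)"
        unfolding w' by (metis norm_mult norm_triangle_ineq4)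
      also have "\<dots> \<le> \<bar>B\<bar> + C * \<bar>Bv\<bar>"
        using Suc.prems(3) w cwb[OF w] Bv[rule_format, of n] unfolding C_def
        by (intro add_mono mult_mono) (auto intro: order.trans[OF _ abs_ge_self])
      finally show "cmod (w' n) \<le> \<bar>B\<bar> + C * \<bar>Bv\<bar>" .
    qed
    obtain N1 where N1: "\<forall>n\<ge>N1. \<forall>w\<in>W'. cmod (w n - lim w) \<le> \<delta>/2"
      using Suc.IH[OF v'c rep bnd, of "\<delta>/2"] Suc.prems(4) by auto
    have "v m \<longlonglongrightarrow> lim (v m)" using vmc convergent_LIMSEQ_iff by blast
    then obtain N2 where N2: "\<forall>n\<ge>N2. cmod (v m n - lim (v m)) < \<delta> / (2*C)"
      using Cp Suc.prems(4) unfolding LIMSEQ_def dist_norm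
      by (metis divide_pos_pos mult_pos_pos zero_less_numeral)
    show ?thesis
    proof (intro exI[of _ "max N1 N2"] allI impI ballI)
      fix n w assume n: "max N1 N2 \<le> n" and w: "w \<in> W"
      define w' where "w' = (\<lambda>k. w k - cw w * v m k)"
      have w'W: "w' \<in> W'" unfolding W'_def w'_def using w by auto
      obtain a where "w' = (\<lambda>k. \<Sum>i<m. a i * v' i k)" using rep w'W by blast
      hence w'l: "w' \<longlonglongrightarrow> lim w'"
        using sum_conv[OF v'c] by (metis limI)
      have weq: "(\<lambda>k. w' k + cw w * v m k) = w" unfolding w'_def by auto
      have "(\<lambda>k. w' k + cw w * v m k) \<longlonglongrightarrow> lim w' + cw w * lim (v m)"
        using w'l \<open>v m \<longlonglongrightarrow> lim (v m)\<close> by (intro tendsto_add tendsto_mult_left)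
      hence "w \<longlonglongrightarrow> lim w' + cw w * lim (v m)" unfolding weq .
      hence lw: "lim w = lim w' + cw w * lim (v m)" by (rule limI)
      have "w n - lim w = (w' n - lim w') + cw w * (v m n - lim (v m))"
        unfolding lw w'_def by (simp add: algebra_simps)
      hence "cmod (w n - lim w) \<le> cmod (w' n - lim w') + cmod (cw w) * cmod (v m n - lim (v m))"
        by (metis norm_mult norm_triangle_ineq)
      also have "\<dots> \<le> \<delta>/2 + C * (\<delta> / (2*C))"
        using N1 w'W n N2 cwb[OF w] unfolding C_def
        by (intro add_mono mult_mono) (auto intro: less_imp_le)
      also have "\<dots> = \<delta>" using Cp by simp
      finally show "cmod (w n - lim w) \<le> \<delta>" .
    qed
  qed
qed

theorem mainTheorem7:
  fixes S :: "(nat \<Rightarrow> complex) \<Rightarrow> (nat \<Rightarrow> complex)" and \<epsilon> :: real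
  assumes "\<epsilon> > 0"
    and "bounded_linear_on_c S"
    and "finite_rank_on_c S"
    and "adj_minus_id_L_norm S < \<epsilon>"
  shows "opnorm_minus_id S \<ge> 2 - \<epsilon>"
proof -
  have Sc: "\<And>x. convergent x \<Longrightarrow> convergent (S x)"
    using assms(2) unfolding bounded_linear_on_c_def conv_seqs_def by auto
  obtain K where K: "\<And>x. convergent x \<Longrightarrow> supnorm (S x) \<le> K * supnorm x"
    using assms(2) unfolding bounded_linear_on_c_def conv_seqs_def by auto
  obtain m :: nat and v :: "nat \<Rightarrow> nat \<Rightarrow> complex" where mv: "\<forall>i<m. convergent (v i)"
    "\<forall>x. convergent x \<longrightarrow> (\<exists>a. S x = (\<lambda>k. \<Sum>i<m. a i * v i k))"
    using assms(3) unfolding finite_rank_on_c_def conv_seqs_def mem_Collect_eq by blast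
  have Sb: "supnorm (S x) \<le> \<bar>K\<bar>" if "convergent x" "supnorm x \<le> 1" for x
  proof -
    have "0 \<le> supnorm x" using conv_le_sup[OF that(1), of 0] norm_ge_zero[of "x 0"] by linarith
    have "K * supnorm x \<le> \<bar>K\<bar> * supnorm x" using \<open>0 \<le> supnorm x\<close> by (simp add: mult_right_mono)
    also have "\<dots> \<le> \<bar>K\<bar>" using that(2) \<open>0 \<le> supnorm x\<close> by (simp add: mult_left_le)
    finally have "K * supnorm x \<le> \<bar>K\<bar>" .
    thus ?thesis using K[OF that(1)] by linarith
  qed
  define W where "W = S ` {x. convergent x \<and> supnorm x \<le> 1}"
  have Wrep: "\<forall>w\<in>W. \<exists>a. w = (\<lambda>k. \<Sum>i<m. a i * v i k)" using mv(2) unfolding W_def by auto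
  have Wb: "\<forall>w\<in>W. \<forall>n. cmod (w n) \<le> \<bar>K\<bar>"
  proof (intro ballI allI)
    fix w n assume "w \<in> W"
    then obtain z where z: "convergent z" "supnorm z \<le> 1" "w = S z" unfolding W_def by auto
    show "cmod (w n) \<le> \<bar>K\<bar>" using conv_le_sup[OF Sc[OF z(1)], of n] Sb[OF z(1,2)] z(3) by simp
  qed
  define e' where "e' = adj_minus_id_L_norm S"
  define \<delta> where "\<delta> = (\<epsilon> - e') / 2"
  have dp: "\<delta> > 0" using assms(4) unfolding \<delta>_def e'_def by simp
  obtain N where N: "\<forall>n\<ge>N. \<forall>w\<in>W. cmod (w n - lim w) \<le> \<delta>"
    using tail_unif[OF mv(1) Wrep Wb dp] by blast
  define x where "x = (\<lambda>k. if k \<le> N then (1::complex) else -1)"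
  have xl: "x \<longlonglongrightarrow> -1"
  proof (rule tendsto_eventually)
    show "\<forall>\<^sub>F k in sequentially. x k = -1"
      unfolding x_def eventually_sequentially by (intro exI[of _ "Suc N"]) auto
  qed
  hence xc: "convergent x" and limx: "lim x = -1" by (auto intro: convergentI limI)
  have xs: "supnorm x \<le> 1" by (rule sup_le) (simp add: x_def)
  have SxW: "S x \<in> W" unfolding W_def using xc xs by auto
  have A: "cmod (lim (S x) - lim x) \<le> e'"
  proof -
    have "cmod (lim (S x) - lim x) \<in>
        {cmod (limfun (S x) - limfun x) | x. x \<in> conv_seqs \<and> supnorm x \<le> 1}"
      using xc xs unfolding limfun_def conv_seqs_def by auto
    moreover have "bdd_above {cmod (limfun (S x) - limfun x) | x. x \<in> conv_seqs \<and> supnorm x \<le> 1}"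
    proof (rule bdd_aboveI)
      fix y assume "y \<in> {cmod (limfun (S x) - limfun x) | x. x \<in> conv_seqs \<and> supnorm x \<le> 1}"
      then obtain z where z: "convergent z" "supnorm z \<le> 1" "y = cmod (lim (S z) - lim z)"
        unfolding limfun_def conv_seqs_def by auto
      have "y \<le> cmod (lim (S z)) + cmod (lim z)" using z(3) norm_triangle_ineq4 by blast
      also have "\<dots> \<le> \<bar>K\<bar> + 1"
        using lim_le_sup[OF Sc[OF z(1)]] lim_le_sup[OF z(1)] Sb[OF z(1,2)] z(2) by linarith
      finally show "y \<le> \<bar>K\<bar> + 1" .
    qed
    ultimately show ?thesis unfolding e'_def adj_minus_id_L_norm_def by (rule cSup_upper)
  qed
  have B: "cmod (S x N - lim (S x)) \<le> \<delta>" using N SxW by auto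
  have "2 = cmod ((1 - S x N) + (S x N - lim (S x)) + (lim (S x) - lim x))"
    using limx by simp
  also have "\<dots> \<le> cmod (1 - S x N) + cmod (S x N - lim (S x)) + cmod (lim (S x) - lim x)"
    by (rule order_trans[OF norm_triangle_ineq add_right_mono[OF norm_triangle_ineq]])
  finally have C: "cmod (S x N - x N) \<ge> 2 - \<delta> - e'"
    using A B by (simp add: x_def norm_minus_commute)
  have D: "cmod (S x N - x N) \<le> supnorm (\<lambda>n. S x n - x n)"
    using conv_le_sup[of "\<lambda>n. S x n - x n" N] Sc[OF xc] xc
    by (simp add: convergent_diff)
  have E: "supnorm (\<lambda>n. S x n - x n) \<le> opnorm_minus_id S"
    unfolding opnorm_minus_id_def
  proof (rule cSup_upper)
    show "supnorm (\<lambda>n. S x n - x n) \<in> {supnorm (\<lambda>n. S x n - x n) |x. x \<in> conv_seqs \<and> supnorm x \<le> 1}"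
      using xc xs unfolding conv_seqs_def by auto
    show "bdd_above {supnorm (\<lambda>n. S x n - x n) |x. x \<in> conv_seqs \<and> supnorm x \<le> 1}"
    proof (rule bdd_aboveI)
      fix y assume "y \<in> {supnorm (\<lambda>n. S x n - x n) |x. x \<in> conv_seqs \<and> supnorm x \<le> 1}"
      then obtain z where z: "convergent z" "supnorm z \<le> 1" "y = supnorm (\<lambda>n. S z n - z n)"
        unfolding conv_seqs_def by auto
      have "supnorm (\<lambda>n. S z n - z n) \<le> \<bar>K\<bar> + 1"
      proof (rule sup_le)
        fix n
        have "cmod (S z n - z n) \<le> cmod (S z n) + cmod (z n)" by (rule norm_triangle_ineq4)
        also have "\<dots> \<le> \<bar>K\<bar> + 1"
          using conv_le_sup[OF Sc[OF z(1)], of n] conv_le_sup[OF z(1), of n] Sb[OF z(1,2)] z(2)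
          by linarith
        finally show "cmod (S z n - z n) \<le> \<bar>K\<bar> + 1" .
      qed
      thus "y \<le> \<bar>K\<bar> + 1" using z(3) by simp
    qed
  qed
  have "e' < \<epsilon>" using assms(4) unfolding e'_def .
  have F: "2 - \<epsilon> \<le> 2 - \<delta> - e'" using \<open>e' < \<epsilon>\<close> unfolding \<delta>_def by (simp add: field_simps)
  show ?thesis using order_trans[OF F order_trans[OF C order_trans[OF D E]]] .
qed

end
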